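(* Let $\Upsilon$ be a tree and let $\|\cdot\|$ be an equivalent strictly convex norm on $C_0(\Upsilon)$. Then the associated function $\mu(t)=\inf\{\|\mathbf{1}_{(0,t]}+f'\|: f'\in C_0(\Upsilon),\ \operatorname{supp}f'\subseteq(t,\infty)\}$ is constant on no ever-branching subset of $\Upsilon$.
   Context: A tree is a partially ordered set $(\Upsilon,\preceq)$ such that for each $t$ the set $(0,t]=\{s:s\preceq t\}$ is well-ordered; write $(0,t)=\{s:s\prec t\}$, $[t,\infty)=\{u:t\preceq u\}$, $(t,\infty)=\{u:t\prec u\}$, and let $r(t)$ be the order type of $(0,t)$. Trees are assumed Hausdorff: if $r(t)$ is a limit ordinal and $(0,t)=(0,t')$ then $t=t'$. $\Upsilon$ carries the coarsest topology in which every $(0,t]$ is open and closed, and $C_0(\Upsilon)$ is the space of continuous $f:\Upsilon\to\mathbb{R}$ with $\{|f|\ge\epsilon\}$ compact for every $\epsilon>0$, with the supremum norm; $\operatorname{supp}f=\{s:f(s)\ne0\}$. A subset $\Gamma\subseteq\Upsilon$ is ever-branching if it is non-empty and for every $t\in\Gamma$ the set $\Gamma\cap[t,\infty)$ is not totally ordered. A norm is strictly convex if $\|x\|=\|y\|=\tfrac12\|x+y\|$ implies $x=y$. *)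

theory Defs
  imports "HOL-Analysis.Analysis"
begin

definition below :: "'a::order \<Rightarrow> 'a set" where
  "below t = {s. s \<le> t}"

definition strictly_below :: "'a::order \<Rightarrow> 'a set" where
  "strictly_below t = {s. s < t}"

definition above :: "'a::order \<Rightarrow> 'a set" where
  "above t = {u. t \<le> u}"

definition strictly_above :: "'a::order \<Rightarrow> 'a set" where
  "strictly_above t = {u. t < u}"

definition totally_ordered :: "'a::order set \<Rightarrow> bool" where
  "totally_ordered A \<longleftrightarrow> (\<forall>x\<in>A. \<forall>y\<in>A. x \<le> y \<or> y \<le> x)"

definition well_ordered_set :: "'a::order set \<Rightarrow> bool" where
  "well_ordered_set A \<longleftrightarrow> totally_ordered A \<and>
     (\<forall>B. B \<subseteq> A \<and> B \<noteq> {} \<longrightarrow> (\<exists>m\<in>B. \<forall>b\<in>B. m \<le> b))"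

text \<open>The order type of (0,t) is a limit ordinal iff (0,t) is nonempty and has no maximum.\<close>
definition limit_height :: "'a::order \<Rightarrow> bool" where
  "limit_height t \<longleftrightarrow> strictly_below t \<noteq> {} \<and>
     \<not> (\<exists>m\<in>strictly_below t. \<forall>s\<in>strictly_below t. s \<le> m)"

definition is_tree :: "'a::order itself \<Rightarrow> bool" where
  "is_tree _ \<longleftrightarrow> (\<forall>t::'a. well_ordered_set (below t)) \<and>
     (\<forall>t t'::'a. limit_height t \<and> strictly_below t = strictly_below t' \<longrightarrow> t = t')"

definition tree_topology :: "'a::order topology" where
  "tree_topology = topology_generated_by (range below \<union> range (\<lambda>t. - below t))"

definition C0 :: "('a::order \<Rightarrow> real) set" where
  "C0 = {f. continuous_map tree_topology euclideanreal f \<and>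
            (\<forall>\<epsilon>>0. compactin tree_topology {s. \<bar>f s\<bar> \<ge> \<epsilon>})}"

definition supp :: "('a \<Rightarrow> real) \<Rightarrow> 'a set" where
  "supp f = {s. f s \<noteq> 0}"

definition sup_norm :: "('a \<Rightarrow> real) \<Rightarrow> real" where
  "sup_norm f = (SUP s. \<bar>f s\<bar>)"

text \<open>A norm on C0 (values of N outside C0 are irrelevant).\<close>
definition norm_on_C0 :: "(('a::order \<Rightarrow> real) \<Rightarrow> real) \<Rightarrow> bool" where
  "norm_on_C0 N \<longleftrightarrow>
     (\<forall>f\<in>C0. N f \<ge> 0 \<and> (N f = 0 \<longleftrightarrow> f = (\<lambda>_. 0))) \<and>
     (\<forall>f\<in>C0. \<forall>c::real. N (\<lambda>s. c * f s) = \<bar>c\<bar> * N f) \<and>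
     (\<forall>f\<in>C0. \<forall>g\<in>C0. N (\<lambda>s. f s + g s) \<le> N f + N g)"

definition equivalent_norm_on_C0 :: "(('a::order \<Rightarrow> real) \<Rightarrow> real) \<Rightarrow> bool" where
  "equivalent_norm_on_C0 N \<longleftrightarrow> norm_on_C0 N \<and>
     (\<exists>a b. 0 < a \<and> 0 < b \<and> (\<forall>f\<in>C0. a * sup_norm f \<le> N f \<and> N f \<le> b * sup_norm f))"

definition strictly_convex_on_C0 :: "(('a::order \<Rightarrow> real) \<Rightarrow> real) \<Rightarrow> bool" where
  "strictly_convex_on_C0 N \<longleftrightarrow>
     (\<forall>x\<in>C0. \<forall>y\<in>C0. N x = N y \<and> N y = N (\<lambda>s. x s + y s) / 2 \<longrightarrow> x = y)"

definition mu :: "(('a::order \<Rightarrow> real) \<Rightarrow> real) \<Rightarrow> 'a \<Rightarrow> real" where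
  "mu N t = Inf {N (\<lambda>s. indicator (below t) s + f' s) | f'. f' \<in> C0 \<and> supp f' \<subseteq> strictly_above t}"

definition ever_branching :: "'a::order set \<Rightarrow> bool" where
  "ever_branching \<Gamma> \<longleftrightarrow> \<Gamma> \<noteq> {} \<and> (\<forall>t\<in>\<Gamma>. \<not> totally_ordered (\<Gamma> \<inter> above t))"

end

theory Submission
  imports Defs
begin


lemma topspace_tree [simp]: "topspace (tree_topology::'a::order topology) = UNIV"
  unfolding tree_topology_def by (auto simp: below_def)

lemma open_below: "openin tree_topology (below t)"
  unfolding tree_topology_def by (rule topology_generated_by_Basis) auto

lemma open_nbelow: "openin tree_topology (- below t)"
  unfolding tree_topology_def by (rule topology_generated_by_Basis) auto

lemma closed_below: "closedin tree_topology (below t)"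
  unfolding closedin_def using open_nbelow by (simp add: Compl_eq_Diff_UNIV)

lemma tree_chain:
  assumes "is_tree TYPE('a::order)" "(s::'a) \<le> t" "r \<le> t"
  shows "s \<le> r \<or> r \<le> s"
  using assms unfolding is_tree_def well_ordered_set_def totally_ordered_def below_def by auto

lemma tree_least:
  assumes "is_tree TYPE('a::order)" "B \<subseteq> below (t::'a)" "B \<noteq> {}"
  shows "\<exists>m\<in>B. \<forall>b\<in>B. m \<le> b"
  using assms unfolding is_tree_def well_ordered_set_def by blast



definition nb :: "'a::order set \<Rightarrow> 'a \<Rightarrow> bool" where
  "nb U r \<longleftrightarrow> (\<exists>q<r. \<forall>p. q < p \<and> p \<le> r \<longrightarrow> p \<in> U) \<or> below r \<subseteq> U"

lemma nb_basis_neg: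
  assumes tr: "is_tree TYPE('a::order)" and r: "\<not> r \<le> (s::'a)"
  shows "nb (- below s) r"
proof -
  let ?J = "{p. p \<le> r \<and> p \<le> s}"
  obtain p0 where p0: "p0 \<le> r" "\<not> p0 \<le> s" and p0min: "\<And>p. p \<le> r \<Longrightarrow> \<not> p \<le> s \<Longrightarrow> p0 \<le> p"
    using tree_least[OF tr, of "{p. p \<le> r \<and> \<not> p \<le> s}" r] r by (auto simp: below_def)
  have J1: "strictly_below p0 = ?J"
  proof (intro set_eqI iffI)
    fix p assume "p \<in> strictly_below p0"
    then have "p < p0" by (simp add: strictly_below_def)
    then show "p \<in> ?J" using p0 p0min[of p] by force
  next
    fix p assume "p \<in> ?J"
    then have "p \<le> r" "p \<le> s" by auto
    then have "p \<le> p0 \<or> p0 \<le> p" using tree_chain[OF tr _ p0(1)] by blast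
    then show "p \<in> strictly_below p0" using p0 \<open>p \<le> s\<close> 
      by (auto simp: strictly_below_def order.order_iff_strict dest: order_trans)
  qed
  show ?thesis
  proof (cases "?J = {}")
    case True
    then show ?thesis unfolding nb_def below_def by auto
  next
    case ne: False
    show ?thesis
    proof (cases "\<exists>q\<in>?J. \<forall>j\<in>?J. j \<le> q")
      case True
      then obtain q where q: "q \<in> ?J" "\<forall>j\<in>?J. j \<le> q" by blast
      have "q < r" using q(1) r by (auto simp: order.order_iff_strict)
      moreover have "\<forall>p. q < p \<and> p \<le> r \<longrightarrow> p \<in> - below s"
        using q by (force simp: below_def)
      ultimately show ?thesis unfolding nb_def by blast
    next
      case False
      have lim: "limit_height p0" unfolding limit_height_def J1 using ne False by blast
      obtain r' where r': "r' \<le> s" "r' \<notin> ?J" and r'min: "\<And>p. p \<le> s \<Longrightarrow> p \<notin> ?J \<Longrightarrow> r' \<le> p"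
      proof -
        have "s \<notin> ?J" using False by auto
        then show ?thesis using that tree_least[OF tr, of "{p. p \<le> s \<and> p \<notin> ?J}" s]
          by (auto simp: below_def)
      qed
      have J2: "strictly_below r' = ?J"
      proof (intro set_eqI iffI)
        fix p assume "p \<in> strictly_below r'"
        then have "p < r'" by (simp add: strictly_below_def)
        then show "p \<in> ?J" using r' r'min[of p] by force
      next
        fix p assume "p \<in> ?J"
        then have "p \<le> r" "p \<le> s" by auto
        then have "p \<le> r' \<or> r' \<le> p" using tree_chain[OF tr _ r'(1)] by blast
        then show "p \<in> strictly_below r'" using r' \<open>p \<le> s\<close> \<open>p \<le> r\<close> \<open>p \<in> ?J\<close>
          by (auto simp: strictly_below_def order.order_iff_strict dest: order_trans)
      qed
      have "p0 = r'" using tr lim J1 J2 unfolding is_tree_def by metis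
      then show ?thesis using p0 r' by auto
    qed
  qed
qed

lemma nb_open:
  assumes tr: "is_tree TYPE('a::order)" and U: "openin tree_topology (U::'a set)"
  shows "\<forall>r\<in>U. nb U r"
proof -
  have "generate_topology_on (range below \<union> range (\<lambda>t. - below t)) U"
    using U unfolding tree_topology_def by (rule openin_topology_generated_by)
  then show ?thesis
  proof induct
    case Empty
    then show ?case by simp
  next
    case (Int a b)
    show ?case
    proof
      fix r assume "r \<in> a \<inter> b"
      then have "nb a r" "nb b r" using Int by auto
      then show "nb (a \<inter> b) r"
        unfolding nb_def
      proof (elim disjE exE conjE)
        fix q1 q2 assume q1: "q1 < r" "\<forall>p. q1 < p \<and> p \<le> r \<longrightarrow> p \<in> a"
          and q2: "q2 < r" "\<forall>p. q2 < p \<and> p \<le> r \<longrightarrow> p \<in> b"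
        have "q1 \<le> q2 \<or> q2 \<le> q1" using tree_chain[OF tr, of q1 r q2] q1 q2 by auto
        then show "(\<exists>q<r. \<forall>p. q < p \<and> p \<le> r \<longrightarrow> p \<in> a \<inter> b) \<or> below r \<subseteq> a \<inter> b"
        proof
          assume "q1 \<le> q2" then show ?thesis using q1 q2
            by (metis IntI order_le_less_trans)
        next
          assume "q2 \<le> q1" then show ?thesis using q1 q2
            by (metis IntI order_le_less_trans)
        qed
      next
        fix q assume "below r \<subseteq> b" "q < r" "\<forall>p. q < p \<and> p \<le> r \<longrightarrow> p \<in> a"
        then show "(\<exists>q<r. \<forall>p. q < p \<and> p \<le> r \<longrightarrow> p \<in> a \<inter> b) \<or> below r \<subseteq> a \<inter> b"
          unfolding below_def by blast
      next
        fix q assume "below r \<subseteq> a" "q < r" "\<forall>p. q < p \<and> p \<le> r \<longrightarrow> p \<in> b"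
        then show "(\<exists>q<r. \<forall>p. q < p \<and> p \<le> r \<longrightarrow> p \<in> a \<inter> b) \<or> below r \<subseteq> a \<inter> b"
          unfolding below_def by blast
      next
        assume "below r \<subseteq> a" "below r \<subseteq> b"
        then show "(\<exists>q<r. \<forall>p. q < p \<and> p \<le> r \<longrightarrow> p \<in> a \<inter> b) \<or> below r \<subseteq> a \<inter> b"
          by blast
      qed
    qed
  next
    case (UN K)
    show ?case
    proof
      fix r assume "r \<in> \<Union>K"
      then obtain k where "k \<in> K" "r \<in> k" by auto
      then have "nb k r" using UN by auto
      then show "nb (\<Union>K) r" using \<open>k \<in> K\<close> unfolding nb_def by blast
    qed
  next
    case (Basis s)
    then show ?case
    proof (elim UnE imageE)
      fix t assume "s = below t" then show ?thesis
        by (auto simp: nb_def below_def)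
    next
      fix t assume "s = - below t" then show ?thesis
        using nb_basis_neg[OF tr] by (auto simp: below_def)
    qed
  qed
qed

lemma compact_below:
  assumes tr: "is_tree TYPE('a::order)"
  shows "compactin tree_topology (below (t::'a))"
  unfolding compactin_def
proof (intro conjI allI impI)
  fix \<U> assume H: "(\<forall>U\<in>\<U>. openin tree_topology U) \<and> below t \<subseteq> \<Union>\<U>"
  let ?B = "{r. r \<le> t \<and> \<not> (\<exists>F. finite F \<and> F \<subseteq> \<U> \<and> below r \<subseteq> \<Union>F)}"
  have "?B = {}"
  proof (rule ccontr)
    assume "?B \<noteq> {}"
    moreover have "?B \<subseteq> below t" by (auto simp: below_def)
    ultimately obtain m where m: "m \<in> ?B" and mmin': "\<forall>b\<in>?B. m \<le> b"
      using tree_least[OF tr] by meson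
    have mmin: "\<And>b. b \<in> ?B \<Longrightarrow> m \<le> b" using mmin' by blast
    have "m \<in> below t" using m by (simp add: below_def)
    then have "m \<in> \<Union>\<U>" using H by blast
    then obtain V where V: "V \<in> \<U>" "m \<in> V" by blast
    then have "nb V m" using nb_open[OF tr] H by blast
    then show False unfolding nb_def
    proof (elim disjE exE conjE)
      fix q assume q: "q < m" "\<forall>p. q < p \<and> p \<le> m \<longrightarrow> p \<in> V"
      have "q \<notin> ?B" using mmin q(1) by (meson leD)
      moreover have "q \<le> t" using q(1) m by auto
      ultimately obtain F where F: "finite F" "F \<subseteq> \<U>" "below q \<subseteq> \<Union>F" by auto
      have "below m \<subseteq> \<Union>(insert V F)"
      proof
        fix p assume "p \<in> below m"
        then have "p \<le> m" by (simp add: below_def)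
        then have "p \<le> q \<or> q < p" using tree_chain[OF tr, of p m q] q(1) by (auto simp: order.order_iff_strict)
        then show "p \<in> \<Union>(insert V F)" using F q \<open>p \<le> m\<close> by (auto simp: below_def)
      qed
      moreover have "finite (insert V F)" "insert V F \<subseteq> \<U>" using F V by auto
      ultimately show False using m by blast
    next
      assume "below m \<subseteq> V"
      then have "finite {V}" "{V} \<subseteq> \<U>" "below m \<subseteq> \<Union>{V}" using V by auto
      then show False using m by blast
    qed
  qed
  then have "t \<notin> ?B" by blast
  then show "\<exists>F. finite F \<and> F \<subseteq> \<U> \<and> below t \<subseteq> \<Union>F" by auto
qed simp



lemma closedin_level:
  assumes "continuous_map tree_topology euclideanreal f"
  shows "closedin tree_topology {s. e \<le> \<bar>f s\<bar>}"
proof -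
  have "closed {y::real. e \<le> \<bar>y\<bar>}" by (intro closed_Collect_le continuous_intros)
  then have "closedin tree_topology {x \<in> topspace tree_topology. f x \<in> {y::real. e \<le> \<bar>y\<bar>}}"
    by (intro closedin_continuous_map_preimage[OF assms]) auto
  then show ?thesis by simp
qed

lemma C0_I:
  assumes "continuous_map tree_topology euclideanreal f"
    and "\<And>e. e > 0 \<Longrightarrow> \<exists>K. compactin tree_topology K \<and> {s. e \<le> \<bar>f s\<bar>} \<subseteq> K"
  shows "f \<in> C0"
  unfolding C0_def
proof (intro CollectI conjI allI impI assms(1))
  fix e :: real assume "e > 0"
  then obtain K where "compactin tree_topology K" "{s. e \<le> \<bar>f s\<bar>} \<subseteq> K" using assms(2) by blast
  then show "compactin tree_topology {s. e \<le> \<bar>f s\<bar>}"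
    using closed_compactin closedin_level[OF assms(1)] by blast
qed

lemma C0_cont: "f \<in> C0 \<Longrightarrow> continuous_map tree_topology euclideanreal f"
  by (simp add: C0_def)

lemma C0_compact: "f \<in> C0 \<Longrightarrow> e > 0 \<Longrightarrow> compactin tree_topology {s. e \<le> \<bar>f s\<bar>}"
  by (simp add: C0_def)

lemma C0_bounded:
  assumes "f \<in> C0" shows "\<exists>B. \<forall>s. \<bar>f s\<bar> \<le> B"
proof -
  have "compactin euclideanreal (f ` {s. 1 \<le> \<bar>f s\<bar>})"
    using image_compactin[OF C0_compact[OF assms, of 1] C0_cont[OF assms]] by simp
  then have "bounded (f ` {s. 1 \<le> \<bar>f s\<bar>})" by (simp add: compact_imp_bounded)
  then obtain B where B: "\<forall>y\<in>f ` {s. 1 \<le> \<bar>f s\<bar>}. \<bar>y\<bar> \<le> B" unfolding bounded_iff by auto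
  have "\<bar>f s\<bar> \<le> max B 1" for s using B[rule_format, of "f s"] by (cases "1 \<le> \<bar>f s\<bar>") auto
  then show ?thesis by blast
qed

lemma sup_norm_ge: assumes "f \<in> C0" shows "\<bar>f s\<bar> \<le> sup_norm f"
proof -
  obtain B where "\<forall>s. \<bar>f s\<bar> \<le> B" using C0_bounded[OF assms] by blast
  then have "bdd_above (range (\<lambda>s. \<bar>f s\<bar>))" by (auto intro: bdd_aboveI)
  then show ?thesis unfolding sup_norm_def by (rule cSUP_upper[OF UNIV_I])
qed

lemma sup_norm_le: assumes "\<And>s. \<bar>f s\<bar> \<le> B" shows "sup_norm f \<le> B"
  unfolding sup_norm_def by (rule cSUP_least) (auto intro: assms)

lemma C0_add: assumes "f \<in> C0" "g \<in> C0" shows "(\<lambda>s. f s + g s) \<in> C0"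
proof (rule C0_I)
  show "continuous_map tree_topology euclideanreal (\<lambda>s. f s + g s)"
    using C0_cont[OF assms(1)] C0_cont[OF assms(2)] by (intro continuous_map_add)
next
  fix e :: real assume "e > 0"
  have sub: "{s. e \<le> \<bar>f s + g s\<bar>} \<subseteq> {s. e/2 \<le> \<bar>f s\<bar>} \<union> {s. e/2 \<le> \<bar>g s\<bar>}" by auto
  have c1: "compactin tree_topology {s. e/2 \<le> \<bar>f s\<bar>}"
    by (rule C0_compact[OF assms(1)]) (use \<open>e > 0\<close> in simp)
  have c2: "compactin tree_topology {s. e/2 \<le> \<bar>g s\<bar>}"
    by (rule C0_compact[OF assms(2)]) (use \<open>e > 0\<close> in simp)
  have "compactin tree_topology ({s. e/2 \<le> \<bar>f s\<bar>} \<union> {s. e/2 \<le> \<bar>g s\<bar>})"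
    using compactin_Un[OF c1 c2] by blast
  then show "\<exists>K. compactin tree_topology K \<and> {s. e \<le> \<bar>f s + g s\<bar>} \<subseteq> K" using sub by blast
qed

lemma C0_scale: assumes "f \<in> C0" shows "(\<lambda>s. c * f s) \<in> C0"
proof (rule C0_I)
  show "continuous_map tree_topology euclideanreal (\<lambda>s. c * f s)"
    using C0_cont[OF assms] by (intro continuous_map_real_mult_left)
next
  fix e :: real assume "e > 0"
  show "\<exists>K. compactin tree_topology K \<and> {s. e \<le> \<bar>c * f s\<bar>} \<subseteq> K"
  proof (cases "c = 0")
    case True
    then show ?thesis using \<open>e > 0\<close> by (intro exI[of _ "{}"]) auto
  next
    case False
    have "{s. e \<le> \<bar>c * f s\<bar>} \<subseteq> {s. e / \<bar>c\<bar> \<le> \<bar>f s\<bar>}"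
      using False by (auto simp: abs_mult divide_le_eq mult.commute)
    then show ?thesis using C0_compact[OF assms, of "e / \<bar>c\<bar>"] False \<open>e > 0\<close> by auto
  qed
qed

lemma C0_diff: assumes "f \<in> C0" "g \<in> C0" shows "(\<lambda>s. f s - g s) \<in> C0"
  using C0_add[OF assms(1) C0_scale[OF assms(2), of "-1"]] by simp

lemma C0_zero: "(\<lambda>s. 0) \<in> C0"
  using C0_I[of "\<lambda>s. 0"] by (auto intro: exI[of _ "{}"])

lemma C0_sum: assumes "finite S" "\<And>i. i \<in> S \<Longrightarrow> f i \<in> C0" shows "(\<lambda>s. \<Sum>i\<in>S. f i s) \<in> C0"
  using assms
proof (induct S rule: finite_induct)
  case empty then show ?case using C0_zero by simp
next
  case (insert x F)
  then show ?case using C0_add[of "f x" "\<lambda>s. \<Sum>i\<in>F. f i s"] by simp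
qed

lemma C0_ind:
  assumes tr: "is_tree TYPE('a::order)"
  shows "indicator (below (t::'a)) \<in> C0"
proof (rule C0_I)
  show "continuous_map tree_topology euclideanreal (indicator (below t) :: 'a \<Rightarrow> real)"
    unfolding continuous_map_openin_preimage_eq
  proof (intro conjI allI impI)
    fix U :: "real set" assume "openin euclideanreal U"
    have "\<And>x. ((indicator (below t) x :: real) \<in> U) \<longleftrightarrow> (x \<in> below t \<and> 1 \<in> U) \<or> (x \<notin> below t \<and> 0 \<in> U)"
      by (simp add: indicator_def)
    then have "topspace tree_topology \<inter> indicator (below t) -` U =
      (if (1::real) \<in> U then below t else {}) \<union> (if (0::real) \<in> U then - below t else {})"
      by auto
    then show "openin tree_topology (topspace tree_topology \<inter> (indicator (below t) :: 'a \<Rightarrow> real) -` U)"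
      using open_below open_nbelow openin_topspace[of tree_topology] by auto
  qed auto
next
  fix e :: real assume "e > 0"
  have "{s. e \<le> \<bar>indicator (below t) s :: real\<bar>} \<subseteq> below t" using \<open>e > 0\<close> by (auto simp: indicator_def)
  then show "\<exists>K. compactin tree_topology K \<and> {s. e \<le> \<bar>indicator (below t) s :: real\<bar>} \<subseteq> K"
    using compact_below[OF tr] by blast
qed

lemma C0_unif:
  fixes h :: "nat \<Rightarrow> 'a::order \<Rightarrow> real"
  assumes h: "\<And>n. h n \<in> C0" and conv: "\<And>e. e > 0 \<Longrightarrow> \<exists>n. \<forall>s. \<bar>h n s - g s\<bar> < e"
    and mono: "\<And>n m s. n \<le> m \<Longrightarrow> \<bar>h m s - g s\<bar> \<le> B n"
    and Bconv: "\<And>e. e > 0 \<Longrightarrow> \<exists>n. B n < e"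
  shows "g \<in> C0"
proof (rule C0_I)
  have "continuous_map tree_topology Met_TC.mtopology g"
  proof (rule Met_TC.continuous_map_uniform_limit[where F=sequentially and f=h])
    show "\<forall>\<^sub>F n in sequentially. continuous_map tree_topology Met_TC.mtopology (h n)"
      using C0_cont[OF h] by simp
    fix e :: real assume "e > 0"
    then obtain n where "B n < e" using Bconv by blast
    then have "\<forall>m\<ge>n. \<forall>s. \<bar>h m s - g s\<bar> < e" using mono by (meson order_le_less_trans)
    then show "\<forall>\<^sub>F m in sequentially. \<forall>x\<in>topspace tree_topology. g x \<in> UNIV \<and> dist (h m x) (g x) < e"
      unfolding eventually_sequentially dist_real_def by auto
  qed simp
  then show "continuous_map tree_topology euclideanreal g" by simp
next
  fix e :: real assume "e > 0"
  then obtain n where n: "\<forall>s. \<bar>h n s - g s\<bar> < e/2" using conv[of "e/2"] by auto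
  have "{s. e \<le> \<bar>g s\<bar>} \<subseteq> {s. e/2 \<le> \<bar>h n s\<bar>}"
  proof
    fix s assume "s \<in> {s. e \<le> \<bar>g s\<bar>}"
    moreover have "\<bar>g s\<bar> \<le> \<bar>h n s\<bar> + \<bar>h n s - g s\<bar>" by arith
    ultimately show "s \<in> {s. e/2 \<le> \<bar>h n s\<bar>}" using n[rule_format, of s] by auto
  qed
  then show "\<exists>K. compactin tree_topology K \<and> {s. e \<le> \<bar>g s\<bar>} \<subseteq> K"
    using C0_compact[OF h[of n], of "e/2"] \<open>e > 0\<close> by auto
qed



definition kids :: "'a::order set \<Rightarrow> 'a \<Rightarrow> 'a \<times> 'a" where
  "kids G t = (SOME p. fst p \<in> G \<and> snd p \<in> G \<and> t \<le> fst p \<and> t \<le> snd p \<and> \<not> fst p \<le> snd p \<and> \<not> snd p \<le> fst p)"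

lemma kids:
  assumes "ever_branching G" "t \<in> G"
  shows "fst (kids G t) \<in> G \<and> snd (kids G t) \<in> G \<and> t \<le> fst (kids G t) \<and> t \<le> snd (kids G t) \<and>
    \<not> fst (kids G t) \<le> snd (kids G t) \<and> \<not> snd (kids G t) \<le> fst (kids G t)"
proof -
  have "\<not> totally_ordered (G \<inter> above t)" using assms unfolding ever_branching_def by blast
  then obtain x y where "x \<in> G" "y \<in> G" "t \<le> x" "t \<le> y" "\<not> x \<le> y" "\<not> y \<le> x"
    unfolding totally_ordered_def above_def by blast
  then have "\<exists>p. fst p \<in> G \<and> snd p \<in> G \<and> t \<le> fst p \<and> t \<le> snd p \<and> \<not> fst p \<le> snd p \<and> \<not> snd p \<le> fst p"
    by (intro exI[of _ "(x,y)"]) auto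
  then show ?thesis unfolding kids_def by (rule someI_ex)
qed

primrec node :: "'a::order set \<Rightarrow> 'a \<Rightarrow> bool list \<Rightarrow> 'a" where
  "node G t [] = t"
| "node G t (b # s) = (if b then fst else snd) (kids G (node G t s))"

lemma node_in:
  assumes "ever_branching G" "t \<in> G" shows "node G t s \<in> G"
  using assms by (induct s) (auto simp: kids)

lemma node_step:
  assumes "ever_branching G" "t \<in> G" shows "node G t s \<le> node G t (b # s)"
  using kids[OF assms(1) node_in[OF assms, of s]] by auto

lemma node_ge:
  assumes "ever_branching G" "t \<in> G" shows "t \<le> node G t s"
proof (induct s)
  case Nil then show ?case by simp
next
  case (Cons b s) then show ?case using node_step[OF assms, of s b] by (meson order_trans)
qed

lemma node_incomp:
  assumes tr: "is_tree TYPE('a::order)" and eb: "ever_branching G" and t: "(t::'a) \<in> G"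
  shows "length s = length s' \<Longrightarrow> s \<noteq> s' \<Longrightarrow> \<not> node G t s \<le> node G t s' \<and> \<not> node G t s' \<le> node G t s"
proof (induct s arbitrary: s')
  case Nil then show ?case by simp
next
  case (Cons b s)
  then obtain b' s'' where s': "s' = b' # s''" by (cases s') auto
  show ?case
  proof (cases "s = s''")
    case True
    then have "b \<noteq> b'" using Cons s' by auto
    then show ?thesis using kids[OF eb node_in[OF eb t, of s]] s' True by (cases b) auto
  next
    case False
    then have IH: "\<not> node G t s \<le> node G t s'' \<and> \<not> node G t s'' \<le> node G t s"
      using Cons s' by auto
    have a1: "node G t s \<le> node G t (b # s)" "node G t s'' \<le> node G t (b' # s'')"
      using node_step[OF eb t] by auto
    show ?thesis
    proof (intro conjI notI)
      assume "node G t (b # s) \<le> node G t s'"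
      then have "node G t s \<le> node G t s'" "node G t s'' \<le> node G t s'" using a1 s' by (auto dest: order_trans)
      then show False using IH tree_chain[OF tr] by blast
    next
      assume "node G t s' \<le> node G t (b # s)"
      then have "node G t s'' \<le> node G t (b # s)" using a1 s' by (auto dest: order_trans)
      then show False using IH tree_chain[OF tr, of "node G t s" "node G t (b # s)" "node G t s''"] a1 by blast
    qed
  qed
qed

definition lev :: "nat \<Rightarrow> bool list set" where "lev K = {s. length s = K}"

lemma lev_finite: "finite (lev K)"
  using finite_lists_length_eq[of "UNIV::bool set" K] by (simp add: lev_def)

lemma lev_card: "card (lev K) = 2 ^ K"
  using card_lists_length_eq[of "UNIV::bool set" K] by (simp add: lev_def)

lemma sum_lev_Suc: "(\<Sum>s\<in>lev (Suc K). f s) = (\<Sum>s\<in>lev K. f (True # s) + f (False # s))"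
proof -
  have "lev (Suc K) = (\<lambda>s. True # s) ` lev K \<union> (\<lambda>s. False # s) ` lev K"
  proof (intro set_eqI iffI)
    fix x assume "x \<in> lev (Suc K)"
    then obtain b s where "x = b # s" "length s = K" by (cases x) (auto simp: lev_def)
    then show "x \<in> (\<lambda>s. True # s) ` lev K \<union> (\<lambda>s. False # s) ` lev K" by (cases b) (auto simp: lev_def)
  qed (auto simp: lev_def)
  then have "(\<Sum>s\<in>lev (Suc K). f s) = (\<Sum>s\<in>(\<lambda>s. True # s) ` lev K. f s) + (\<Sum>s\<in>(\<lambda>s. False # s) ` lev K. f s)"
    by (simp add: sum.union_disjoint lev_finite) (subst sum.union_disjoint, auto simp: lev_finite)
  also have "\<dots> = (\<Sum>s\<in>lev K. f (True # s)) + (\<Sum>s\<in>lev K. f (False # s))"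
    by (simp add: sum.reindex inj_on_def)
  finally show ?thesis by (simp add: sum.distrib)
qed

lemma sum_atmost_one:
  fixes phi :: "'b \<Rightarrow> real"
  assumes "finite S" "\<And>x y. x \<in> S \<Longrightarrow> y \<in> S \<Longrightarrow> P x \<Longrightarrow> P y \<Longrightarrow> x = y"
    "\<And>x. x \<in> S \<Longrightarrow> \<not> P x \<Longrightarrow> phi x = 0" "\<And>x. x \<in> S \<Longrightarrow> \<bar>phi x\<bar> \<le> C" "0 \<le> C"
  shows "\<bar>\<Sum>x\<in>S. phi x\<bar> \<le> C"
proof (cases "\<exists>x\<in>S. P x")
  case True
  then obtain x0 where x0: "x0 \<in> S" "P x0" by blast
  have "(\<Sum>x\<in>S. phi x) = phi x0 + (\<Sum>x\<in>S - {x0}. phi x)"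
    using x0 assms(1) by (simp add: sum.remove)
  also have "(\<Sum>x\<in>S - {x0}. phi x) = 0"
    using assms(2,3) x0 by (intro sum.neutral) blast
  finally show ?thesis using assms(4) x0 by simp
next
  case False
  then have "(\<Sum>x\<in>S. phi x) = 0" using assms(3) by (intro sum.neutral) blast
  then show ?thesis using assms(5) by simp
qed



locale setting =
  fixes N :: "('a::order \<Rightarrow> real) \<Rightarrow> real" and G :: "'a set" and c a0 b0 :: real
  assumes tr: "is_tree TYPE('a)" and nrm: "norm_on_C0 N" and a0: "a0 > 0" and b0: "b0 > 0"
    and bnd: "\<And>f. f \<in> C0 \<Longrightarrow> a0 * sup_norm f \<le> N f \<and> N f \<le> b0 * sup_norm f"
    and eb: "ever_branching G" and const: "\<And>t. t \<in> G \<Longrightarrow> mu N t = c"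
begin

lemma N_nonneg: "f \<in> C0 \<Longrightarrow> 0 \<le> N f"
  using nrm unfolding norm_on_C0_def by blast

lemma N_scale: "f \<in> C0 \<Longrightarrow> N (\<lambda>s. r * f s) = \<bar>r\<bar> * N f"
  using nrm unfolding norm_on_C0_def by blast

lemma N_tri: "f \<in> C0 \<Longrightarrow> g \<in> C0 \<Longrightarrow> N (\<lambda>s. f s + g s) \<le> N f + N g"
  using nrm unfolding norm_on_C0_def by blast

lemma N_zero: "N (\<lambda>s. 0) = 0"
  using nrm C0_zero unfolding norm_on_C0_def by blast

lemma N_sum: "finite S \<Longrightarrow> (\<And>i. i \<in> S \<Longrightarrow> f i \<in> C0) \<Longrightarrow> N (\<lambda>s. \<Sum>i\<in>S. f i s) \<le> (\<Sum>i\<in>S. N (f i))"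
proof (induct S rule: finite_induct)
  case empty then show ?case using N_zero by simp
next
  case (insert x F)
  have "N (\<lambda>s. \<Sum>i\<in>insert x F. f i s) = N (\<lambda>s. f x s + (\<Sum>i\<in>F. f i s))"
    using insert by simp
  also have "\<dots> \<le> N (f x) + N (\<lambda>s. \<Sum>i\<in>F. f i s)"
    using insert by (intro N_tri C0_sum) auto
  also have "\<dots> \<le> N (f x) + (\<Sum>i\<in>F. N (f i))" using insert by simp
  finally show ?case using insert by simp
qed

definition Acond :: "'a \<Rightarrow> ('a \<Rightarrow> real) \<Rightarrow> bool" where
  "Acond u h \<longleftrightarrow> h \<in> C0 \<and> (\<forall>r. r \<le> u \<longrightarrow> h r = 1) \<and> (\<forall>r. \<not> r \<le> u \<and> \<not> u < r \<longrightarrow> h r = 0)"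

definition "Aset u = {N (\<lambda>s. indicator (below u) s + f' s) | f'. f' \<in> C0 \<and> supp f' \<subseteq> strictly_above u}"

lemma mu_Aset: "mu N u = Inf (Aset u)"
  unfolding mu_def Aset_def by simp

lemma Aset_bdd: "bdd_below (Aset u)"
  unfolding Aset_def
  by (rule bdd_belowI[of _ 0]) (auto intro!: N_nonneg C0_add C0_ind[OF tr])

lemma Aset_ne: "Aset u \<noteq> {}"
proof -
  have "N (\<lambda>s. indicator (below u) s + 0) \<in> Aset u"
    unfolding Aset_def using C0_zero by (force simp: supp_def)
  then show ?thesis by blast
qed

lemma Acond_in:
  assumes "Acond u h" shows "N h \<in> Aset u"
proof -
  let ?f = "\<lambda>s. h s - indicator (below u) s"
  have f: "?f \<in> C0" using assms C0_diff C0_ind[OF tr] unfolding Acond_def by blast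
  have "supp ?f \<subseteq> strictly_above u"
  proof
    fix s assume "s \<in> supp ?f"
    then have ne: "h s \<noteq> indicator (below u) s" by (simp add: supp_def)
    show "s \<in> strictly_above u"
    proof (rule ccontr)
      assume "s \<notin> strictly_above u"
      then have "\<not> u < s" by (simp add: strictly_above_def)
      then show False using ne assms unfolding Acond_def by (cases "s \<le> u") (auto simp: below_def)
    qed
  qed
  moreover have "N h = N (\<lambda>s. indicator (below u) s + ?f s)" by simp
  ultimately show ?thesis unfolding Aset_def using f
    by (intro CollectI exI[of _ ?f]) simp
qed

lemma mu_le: "Acond u h \<Longrightarrow> mu N u \<le> N h"
  unfolding mu_Aset by (rule cInf_lower[OF Acond_in Aset_bdd])

lemma near: assumes "e > 0" shows "\<exists>h. Acond u h \<and> N h < mu N u + e"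
proof -
  obtain v where v: "v \<in> Aset u" "v < mu N u + e"
    using cInf_lessD[OF Aset_ne[of u], where z="mu N u + e"] assms unfolding mu_Aset by auto
  then obtain f' where f': "f' \<in> C0" "supp f' \<subseteq> strictly_above u"
    and veq: "v = N (\<lambda>s. indicator (below u) s + f' s)" unfolding Aset_def by blast
  let ?h = "\<lambda>s. indicator (below u) s + f' s"
  have "Acond u ?h"
    unfolding Acond_def
  proof (intro conjI allI impI)
    show "?h \<in> C0" using C0_add[OF C0_ind[OF tr] f'(1)] .
  next
    fix r assume "r \<le> u"
    then have "f' r = 0" using f'(2) by (auto simp: supp_def strictly_above_def)
    then show "?h r = 1" using \<open>r \<le> u\<close> by (simp add: below_def)
  next
    fix r assume "\<not> r \<le> u \<and> \<not> u < r"
    then have "f' r = 0" using f'(2) by (auto simp: supp_def strictly_above_def)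
    then show "?h r = 0" using \<open>\<not> r \<le> u \<and> \<not> u < r\<close> by (simp add: below_def)
  qed
  then show ?thesis using v veq by blast
qed

definition gm :: "'a \<Rightarrow> real \<Rightarrow> 'a \<Rightarrow> real" where
  "gm u e = (SOME h. Acond u h \<and> N h < mu N u + e)"

lemma gm: "e > 0 \<Longrightarrow> Acond u (gm u e) \<and> N (gm u e) < mu N u + e"
  unfolding gm_def using near by (rule someI_ex)

definition "Cb = (\<bar>c\<bar> + 1) / a0"

lemma Cb_nonneg: "0 \<le> Cb" using a0 by (simp add: Cb_def)

lemma gm_bound:
  assumes "u \<in> G" "0 < e" "e \<le> 1" shows "\<bar>gm u e r\<bar> \<le> Cb"
proof -
  have A: "Acond u (gm u e)" and n: "N (gm u e) < c + e" using gm[OF assms(2), of u] const[OF assms(1)] by auto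
  then have C: "gm u e \<in> C0" unfolding Acond_def by blast
  have "a0 * \<bar>gm u e r\<bar> \<le> a0 * sup_norm (gm u e)" using sup_norm_ge[OF C] a0 by simp
  also have "\<dots> \<le> N (gm u e)" using bnd[OF C] by blast
  also have "\<dots> \<le> \<bar>c\<bar> + 1" using n assms by linarith
  finally show ?thesis using a0 by (simp add: Cb_def field_simps)
qed

end



context setting begin

definition aK :: "'a \<Rightarrow> nat \<Rightarrow> 'a \<Rightarrow> real" where
  "aK t K r = (\<Sum>s\<in>lev K. (1/2^K) * (if r \<le> node G t s then 1 else 0))"

definition xK :: "'a \<Rightarrow> nat \<Rightarrow> 'a \<Rightarrow> real" where
  "xK t K r = (\<Sum>s\<in>lev K. (1/2^K) * gm (node G t s) (1/2^K) r)"

definition XX :: "'a \<Rightarrow> 'a \<Rightarrow> real" where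
  "XX t r = (SUP K. aK t K r)"

lemma lev_uniq:
  assumes t: "t \<in> G" and "s1 \<in> lev K" "s2 \<in> lev K" "node G t s1 \<le> r" "node G t s2 \<le> r"
  shows "s1 = s2"
proof (rule ccontr)
  assume "s1 \<noteq> s2"
  then have "\<not> node G t s1 \<le> node G t s2 \<and> \<not> node G t s2 \<le> node G t s1"
    using node_incomp[OF tr eb t] assms(2,3) by (auto simp: lev_def)
  then show False using tree_chain[OF tr assms(4,5)] by blast
qed

lemma aK_step:
  assumes t: "t \<in> G"
  shows "aK t K r \<le> aK t (Suc K) r" "aK t (Suc K) r \<le> aK t K r + 1/2^K"
proof -
  have eq: "aK t (Suc K) r = (\<Sum>s\<in>lev K. (1/2^Suc K) * (if r \<le> node G t (True # s) then 1 else 0)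
      + (1/2^Suc K) * (if r \<le> node G t (False # s) then 1 else 0))"
    unfolding aK_def by (rule sum_lev_Suc)
  have lo: "(1/2^K::real) * (if r \<le> node G t s then 1 else 0) \<le>
     (1/2^Suc K) * (if r \<le> node G t (True # s) then 1 else 0)
      + (1/2^Suc K) * (if r \<le> node G t (False # s) then 1 else 0)" for s
  proof (cases "r \<le> node G t s")
    case True
    have n1: "node G t s \<le> node G t (True # s)" "node G t s \<le> node G t (False # s)"
      by (rule node_step[OF eb t])+
    then have "r \<le> node G t (True # s)" "r \<le> node G t (False # s)"
      using True by (meson order_trans)+
    then show ?thesis using True by simp
  qed simp
  show "aK t K r \<le> aK t (Suc K) r"
    unfolding eq by (unfold aK_def, rule sum_mono, rule lo)
  have hi: "(1/2^Suc K::real) * (if r \<le> node G t (True # s) then 1 else 0)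
      + (1/2^Suc K) * (if r \<le> node G t (False # s) then 1 else 0) \<le>
     (1/2^K) * (if r \<le> node G t s then 1 else 0) + (1/2^K) * (if node G t s \<le> r then 1 else 0)" for s
  proof -
    have "r \<le> node G t s \<or> node G t s \<le> r" if "r \<le> node G t (b # s)" for b
      using tree_chain[OF tr that node_step[OF eb t, of s b]] by blast
    then show ?thesis
      by (cases "r \<le> node G t (True # s)"; cases "r \<le> node G t (False # s)"; cases "r \<le> node G t s";
          cases "node G t s \<le> r"; auto simp del: node.simps simp: field_simps)
  qed
  have one: "\<bar>\<Sum>s\<in>lev K. (1/2^K::real) * (if node G t s \<le> r then 1 else 0)\<bar> \<le> 1/2^K"
    by (rule sum_atmost_one[where P="\<lambda>s. node G t s \<le> r"]) (auto simp: lev_finite lev_uniq[OF t])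
  have "aK t (Suc K) r \<le> (\<Sum>s\<in>lev K. (1/2^K) * (if r \<le> node G t s then 1 else 0) + (1/2^K) * (if node G t s \<le> r then 1 else 0))"
    unfolding eq by (rule sum_mono, rule hi)
  also have "\<dots> = aK t K r + (\<Sum>s\<in>lev K. (1/2^K) * (if node G t s \<le> r then 1 else 0))"
    unfolding aK_def by (simp add: sum.distrib)
  also have "\<dots> \<le> aK t K r + 1/2^K" using one by linarith
  finally show "aK t (Suc K) r \<le> aK t K r + 1/2^K" .
qed

lemma aK_mono: assumes t: "t \<in> G" and "K \<le> J" shows "aK t K r \<le> aK t J r"
  using assms(2)
proof (induct J)
  case 0 then show ?case by simp
next
  case (Suc J)
  then show ?case using aK_step(1)[OF t, of J r] by (cases "K = Suc J") auto
qed

lemma aK_tail: assumes t: "t \<in> G" shows "aK t (K + j) r \<le> aK t K r + 2/2^K - 2/2^(K+j)"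
proof (induct j)
  case 0 then show ?case by simp
next
  case (Suc j)
  have "aK t (K + Suc j) r \<le> aK t (K + j) r + 1/2^(K+j)" using aK_step(2)[OF t, of "K+j" r] by simp
  also have "\<dots> \<le> aK t K r + 2/2^K - 2/2^(K+j) + 1/2^(K+j)" using Suc by simp
  also have "\<dots> = aK t K r + 2/2^K - 2/2^(K + Suc j)" by (simp add: field_simps)
  finally show ?case .
qed

lemma aK_le: assumes t: "t \<in> G" shows "aK t J r \<le> aK t K r + 2/2^K"
proof (cases "J \<le> K")
  case True
  have "(0::real) \<le> 2/2^K" by simp
  then show ?thesis using aK_mono[OF t True, of r] by linarith
next
  case False
  then obtain j where "J = K + j" by (metis le_Suc_ex nat_le_linear)
  moreover have "(0::real) \<le> 2/2^(K+j)" by simp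
  moreover have "aK t J r \<le> aK t K r + 2/2^K - 2/2^(K+j)" using aK_tail[OF t, of K j r] \<open>J = K + j\<close> by simp
  ultimately show ?thesis by linarith
qed

lemma aK_bdd: assumes t: "t \<in> G" shows "bdd_above (range (\<lambda>K. aK t K r))"
  using aK_le[OF t, of _ r 0] by (intro bdd_aboveI[of _ "aK t 0 r + 2"]) auto

lemma XX_ge: assumes t: "t \<in> G" shows "aK t K r \<le> XX t r"
  unfolding XX_def by (rule cSUP_upper[OF UNIV_I aK_bdd[OF t]])

lemma XX_le: assumes t: "t \<in> G" shows "XX t r \<le> aK t K r + 2/2^K"
  unfolding XX_def by (rule cSUP_least) (auto intro: aK_le[OF t])

lemma gm_props:
  assumes "u \<in> G" "e > 0" shows "gm u e \<in> C0" "\<And>r. r \<le> u \<Longrightarrow> gm u e r = 1"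
    "\<And>r. \<not> r \<le> u \<Longrightarrow> \<not> u < r \<Longrightarrow> gm u e r = 0" "N (gm u e) < c + e"
  using gm[OF assms(2), of u] const[OF assms(1)] unfolding Acond_def by auto

lemma xK_aK: assumes t: "t \<in> G" shows "\<bar>xK t K r - aK t K r\<bar> \<le> Cb / 2^K"
proof -
  have e: "(0::real) < 1/2^K" "(1::real)/2^K \<le> 1" by auto
  have "xK t K r - aK t K r = (\<Sum>s\<in>lev K. (1/2^K) * (gm (node G t s) (1/2^K) r - (if r \<le> node G t s then 1 else 0)))"
    unfolding xK_def aK_def by (simp add: sum_subtractf right_diff_distrib)
  also have "\<bar>\<dots>\<bar> \<le> Cb / 2^K"
  proof (rule sum_atmost_one[where P="\<lambda>s. node G t s \<le> r"])
    fix s assume "s \<in> lev K" "\<not> node G t s \<le> r"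
    then show "(1/2^K) * (gm (node G t s) (1/2^K) r - (if r \<le> node G t s then 1 else 0)) = 0"
      using gm_props[OF node_in[OF eb t] e(1)] by (cases "r \<le> node G t s") (auto simp: order.strict_iff_order)
  next
    fix s assume "s \<in> lev K"
    show "\<bar>(1/2^K) * (gm (node G t s) (1/2^K) r - (if r \<le> node G t s then 1 else 0))\<bar> \<le> Cb / 2^K"
    proof (cases "r \<le> node G t s")
      case True then show ?thesis using gm_props[OF node_in[OF eb t] e(1)] Cb_nonneg by simp
    next
      case False then show ?thesis using gm_bound[OF node_in[OF eb t] e, of s r]
        by (simp add: abs_mult divide_right_mono)
    qed
  qed (auto simp: lev_finite lev_uniq[OF t] Cb_nonneg)
  finally show ?thesis .
qed

lemma xK_C0: assumes t: "t \<in> G" shows "xK t K \<in> C0"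
  unfolding xK_def[abs_def]
  by (intro C0_sum lev_finite C0_scale gm_props(1)[OF node_in[OF eb t]]) auto

lemma xK_N: assumes t: "t \<in> G" shows "N (xK t K) \<le> c + 1/2^K"
proof -
  have e: "(0::real) < 1/2^K" by auto
  have "N (xK t K) \<le> (\<Sum>s\<in>lev K. N (\<lambda>r. (1/2^K) * gm (node G t s) (1/2^K) r))"
    unfolding xK_def[abs_def]
    by (intro N_sum lev_finite C0_scale gm_props(1)[OF node_in[OF eb t]]) auto
  also have "\<dots> = (\<Sum>s\<in>lev K. (1/2^K) * N (gm (node G t s) (1/2^K)))"
    by (intro sum.cong refl, subst N_scale[OF gm_props(1)[OF node_in[OF eb t] e]]) simp
  also have "\<dots> \<le> (\<Sum>s\<in>lev K. (1/2^K) * (c + 1/2^K))"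
    by (intro sum_mono mult_left_mono less_imp_le[OF gm_props(4)[OF node_in[OF eb t] e]]) auto
  also have "\<dots> = c + 1/2^K" by (simp add: lev_card)
  finally show ?thesis .
qed

end



lemma pow_small:
  assumes "(0::real) < e" shows "\<exists>n. D / 2^n < e"
proof -
  obtain n where "D / e < 2^n" using real_arch_pow[of 2 "D/e"] by auto
  then have "D < e * 2^n" using assms by (simp add: divide_less_eq mult.commute)
  then show ?thesis by (intro exI[of _ n]) (simp add: divide_less_eq mult.commute)
qed

context setting begin

lemma XX_xK: assumes t: "t \<in> G" shows "\<bar>xK t K r - XX t r\<bar> \<le> (Cb + 2) / 2^K"
proof -
  have "\<bar>xK t K r - aK t K r\<bar> \<le> Cb / 2^K" by (rule xK_aK[OF t])
  moreover have "aK t K r \<le> XX t r" "XX t r \<le> aK t K r + 2/2^K" using XX_ge[OF t] XX_le[OF t] by auto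
  moreover have "(Cb + 2) / 2^K = Cb/2^K + 2/2^K" by (simp add: add_divide_distrib)
  ultimately show ?thesis by linarith
qed

lemma XX_C0: assumes t: "t \<in> G" shows "XX t \<in> C0"
proof (rule C0_unif[where h="xK t" and B="\<lambda>n. (Cb + 2) / 2^n"])
  show "xK t n \<in> C0" for n by (rule xK_C0[OF t])
next
  fix e :: real assume "e > 0"
  then obtain n where "(Cb + 2) / 2^n < e" using pow_small by blast
  then show "\<exists>n. \<forall>s. \<bar>xK t n s - XX t s\<bar> < e" using XX_xK[OF t] by (meson order_le_less_trans)
next
  fix n m :: nat and s assume "n \<le> m"
  have "(Cb + 2) / 2^m \<le> (Cb + 2) / 2^n"
    using Cb_nonneg \<open>n \<le> m\<close> by (intro divide_left_mono) (auto intro: power_increasing)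
  then show "\<bar>xK t m s - XX t s\<bar> \<le> (Cb + 2) / 2^n" using XX_xK[OF t, of m s] by linarith
next
  fix e :: real assume "e > 0"
  then show "\<exists>n. (Cb + 2) / 2^n < e" using pow_small by blast
qed

lemma XX_N: assumes t: "t \<in> G" shows "N (XX t) \<le> c"
proof -
  let ?D = "1 + b0 * (Cb + 2)"
  have K: "N (XX t) \<le> c + ?D / 2^K" for K
  proof -
    let ?d = "\<lambda>s. XX t s - xK t K s"
    have d: "?d \<in> C0" using C0_diff[OF XX_C0[OF t] xK_C0[OF t]] .
    have "N (XX t) = N (\<lambda>s. xK t K s + ?d s)" by simp
    also have "\<dots> \<le> N (xK t K) + N ?d" by (rule N_tri[OF xK_C0[OF t] d])
    also have "N ?d \<le> b0 * sup_norm ?d" using bnd[OF d] by blast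
    also have "sup_norm ?d \<le> (Cb + 2) / 2^K"
      by (rule sup_norm_le) (use XX_xK[OF t, of K] in \<open>simp add: abs_minus_commute\<close>)
    finally have "N (XX t) \<le> N (xK t K) + b0 * ((Cb + 2) / 2^K)" using b0 by (simp add: mult_left_mono)
    also have "\<dots> \<le> c + 1/2^K + b0 * ((Cb + 2) / 2^K)" using xK_N[OF t, of K] by simp
    also have "\<dots> = c + ?D / 2^K" by (simp add: field_simps)
    finally show ?thesis .
  qed
  show ?thesis
  proof (rule ccontr)
    assume "\<not> N (XX t) \<le> c"
    then obtain n where "?D / 2^n < N (XX t) - c" using pow_small[of "N (XX t) - c"] by auto
    then show False using K[of n] by linarith
  qed
qed

lemma aK_const: assumes t: "t \<in> G" and "\<And>s. s \<in> lev K \<Longrightarrow> (r \<le> node G t s) = P"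
  shows "aK t K r = (if P then 1 else 0)"
proof -
  have "aK t K r = (\<Sum>s\<in>lev K. (1/2^K) * (if P then 1 else 0))"
    unfolding aK_def using assms(2) by (intro sum.cong) auto
  also have "\<dots> = (if P then 1 else 0)" by (simp add: lev_card)
  finally show ?thesis .
qed

lemma XX_low: assumes t: "t \<in> G" and "r \<le> t" shows "XX t r = 1"
proof -
  have "r \<le> node G t s" for s using assms(2) node_ge[OF eb t, of s] by (rule order_trans)
  then have "aK t K r = 1" for K
    using aK_const[OF t, of K r True] by simp
  then show ?thesis unfolding XX_def by simp
qed

lemma XX_zero: assumes t: "t \<in> G" and "\<not> r \<le> t" "\<not> t < r" shows "XX t r = 0"
proof -
  have "\<not> r \<le> node G t s" for s
  proof
    assume "r \<le> node G t s"
    then have "r \<le> t \<or> t \<le> r" using tree_chain[OF tr _ node_ge[OF eb t]] by blast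
    then show False using assms(2,3) by (auto simp: order.strict_iff_order)
  qed
  then have "aK t K r = 0" for K using aK_const[OF t, of K r False] by auto
  then show ?thesis unfolding XX_def by simp
qed

lemma lev0: "lev 0 = {[]}" by (auto simp: lev_def)

lemma XX_child: assumes t: "t \<in> G" shows "XX t (node G t [True]) \<le> 1/2"
proof -
  let ?l = "node G t [True]" and ?m = "node G t [False]"
  have k: "\<not> ?l \<le> ?m" "\<not> ?m \<le> ?l" "t \<le> ?l" "t \<le> ?m" using kids[OF eb t] by auto
  have "aK t K ?l \<le> 1/2" for K
  proof (cases K)
    case 0
    have "\<not> ?l \<le> t" using k by (meson order_trans)
    then show ?thesis using 0 by (simp add: aK_def lev0)
  next
    case (Suc K')
    have "aK t (Suc 0) ?m = (\<Sum>s\<in>lev 0. (1/2^Suc 0) * (if ?m \<le> node G t (True # s) then 1 else 0)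
      + (1/2^Suc 0) * (if ?m \<le> node G t (False # s) then 1 else 0))"
      unfolding aK_def by (rule sum_lev_Suc)
    also have "\<dots> \<ge> 1/2" by (simp add: lev0 del: node.simps)
    finally have m1: "1/2 \<le> aK t (Suc 0) ?m" .
    have m2: "aK t (Suc 0) ?m \<le> aK t K ?m" using aK_mono[OF t, of "Suc 0" K] Suc by simp
    have "aK t K ?l + aK t K ?m = (\<Sum>s\<in>lev K. (1/2^K) * ((if ?l \<le> node G t s then 1 else 0) + (if ?m \<le> node G t s then 1 else 0)))"
      unfolding aK_def by (simp add: sum.distrib distrib_left del: node.simps)
    also have "\<dots> \<le> (\<Sum>s\<in>lev K. (1/2^K) * 1)"
    proof (intro sum_mono mult_left_mono)
      fix s
      have "\<not> (?l \<le> node G t s \<and> ?m \<le> node G t s)" using tree_chain[OF tr, of ?l "node G t s" ?m] k by blast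
      then show "(if ?l \<le> node G t s then 1 else 0) + (if ?m \<le> node G t s then 1 else 0) \<le> (1::real)"
        by (auto simp del: node.simps)
    qed simp
    also have "\<dots> = 1" by (simp add: lev_card)
    finally show ?thesis using m1 m2 by linarith
  qed
  then show ?thesis unfolding XX_def by (intro cSUP_least) auto
qed

lemma XX_Acond: assumes t: "t \<in> G" shows "Acond t (XX t)"
  unfolding Acond_def using XX_C0[OF t] XX_low[OF t] XX_zero[OF t] by blast

lemma contra:
  assumes t: "t \<in> G" and sc: "strictly_convex_on_C0 N" shows False
proof -
  let ?l = "node G t [True]"
  have l: "?l \<in> G" using node_in[OF eb t] .
  have tl: "t \<le> ?l" using node_ge[OF eb t] .
  let ?x = "XX t" and ?y = "XX ?l"
  have x: "?x \<in> C0" and y: "?y \<in> C0" using XX_C0 t l by auto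
  have Nx: "N ?x = c" using XX_N[OF t] mu_le[OF XX_Acond[OF t]] const[OF t] by linarith
  have Ny: "N ?y = c" using XX_N[OF l] mu_le[OF XX_Acond[OF l]] const[OF l] by linarith
  let ?h = "\<lambda>s. (1/2) * (?x s + ?y s)"
  have "Acond t ?h"
    unfolding Acond_def
  proof (intro conjI allI impI)
    show "?h \<in> C0" using C0_scale[OF C0_add[OF x y]] .
  next
    fix r assume "r \<le> t"
    moreover have "r \<le> ?l" using \<open>r \<le> t\<close> tl by (rule order_trans)
    ultimately show "?h r = 1" using XX_low[OF t, of r] XX_low[OF l, of r] by simp
  next
    fix r assume r: "\<not> r \<le> t \<and> \<not> t < r"
    have "\<not> r \<le> ?l"
    proof
      assume "r \<le> ?l"
      then have "r \<le> t \<or> t \<le> r" using tree_chain[OF tr _ tl] by blast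
      then show False using r by (auto simp: order.strict_iff_order)
    qed
    moreover have "\<not> ?l < r" using r tl by (meson order_le_less_trans)
    ultimately show "?h r = 0" using XX_zero[OF t] XX_zero[OF l] r by simp
  qed
  then have "mu N t \<le> N ?h" by (rule mu_le)
  then have "c \<le> N ?h" using const[OF t] by simp
  also have "N ?h = (1/2) * N (\<lambda>s. ?x s + ?y s)" using N_scale[OF C0_add[OF x y], of "1/2"] by simp
  finally have lo: "2 * c \<le> N (\<lambda>s. ?x s + ?y s)" by simp
  have hi: "N (\<lambda>s. ?x s + ?y s) \<le> 2 * c" using N_tri[OF x y] Nx Ny by simp
  have "N (\<lambda>s. ?x s + ?y s) = 2 * c" using lo hi by linarith
  then have "N ?x = N ?y \<and> N ?y = N (\<lambda>s. ?x s + ?y s) / 2" using Nx Ny by simp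
  then have "?x = ?y"
    using sc x y unfolding strictly_convex_on_C0_def by blast
  then have "?x ?l = ?y ?l" by simp
  moreover have "?y ?l = 1" using XX_low[OF l] by simp
  moreover have "?x ?l \<le> 1/2" using XX_child[OF t] .
  ultimately show False by simp
qed

end


theorem proposition3p4:
  fixes N :: "('a::order \<Rightarrow> real) \<Rightarrow> real" and \<Gamma> :: "'a set"
  assumes "is_tree TYPE('a)"
    and "equivalent_norm_on_C0 N"
    and "strictly_convex_on_C0 N"
    and "ever_branching \<Gamma>"
  shows "\<not> (\<exists>c. \<forall>t\<in>\<Gamma>. mu N t = c)"
proof
  assume "\<exists>c. \<forall>t\<in>\<Gamma>. mu N t = c"
  then obtain c where c: "\<And>t. t \<in> \<Gamma> \<Longrightarrow> mu N t = c" by blast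
  obtain a b where ab: "0 < a" "0 < b" "\<And>f. f \<in> C0 \<Longrightarrow> a * sup_norm f \<le> N f \<and> N f \<le> b * sup_norm f"
    using assms(2) unfolding equivalent_norm_on_C0_def by blast
  have nrm: "norm_on_C0 N" using assms(2) unfolding equivalent_norm_on_C0_def by blast
  interpret S: setting N \<Gamma> c a b
    using assms(1,4) nrm ab c by unfold_locales auto
  obtain t where "t \<in> \<Gamma>" using assms(4) unfolding ever_branching_def by blast
  then show False using S.contra assms(3) by blast
qed

end
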